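(* Let $P$ be the set of primes and choose a random subset $Q\subset P$ by including each prime independently with probability $1/2$. Define the completely multiplicative function $\lambda_Q:\mathbb{N}\to\{-1,1\}$ by $\lambda_Q(p)=-1$ for $p\in Q$, $\lambda_Q(p)=1$ for $p\in P\setminus Q$, and $\lambda_Q(p_1^{e_1}\cdots p_k^{e_k})=\prod_i\lambda_Q(p_i)^{e_i}$. Let $A_Q=\{n\in\mathbb{N}:\lambda_Q(n)=-1\}$. Then for almost every $Q$ the set $A_Q$ is normal.
   Context: $\mathbb{N}=\{1,2,\dots\}$. A set $A\subset\mathbb{N}$ is normal if its indicator sequence in $\{0,1\}^{\mathbb{N}}$ contains every finite binary word $w$ with asymptotic frequency $2^{-|w|}$. *)

theory Defs
  imports "HOL-Probability.Probability" "HOL-Computational_Algebra.Primes"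
begin

definition lambdaQ :: "nat set \<Rightarrow> nat \<Rightarrow> int" where
  "lambdaQ Q n = (\<Prod>p\<in>prime_factors n. (if p \<in> Q then -1 else 1) ^ multiplicity p n)"

definition AQ :: "nat set \<Rightarrow> nat set" where
  "AQ Q = {n. n \<ge> 1 \<and> lambdaQ Q n = -1}"

definition normal_set :: "nat set \<Rightarrow> bool" where
  "normal_set A \<longleftrightarrow> (\<forall>w::bool list.
     (\<lambda>N. real (card {i \<in> {1..N}. \<forall>j<length w. ((i + j) \<in> A) = w ! j}) / real N)
       \<longlonglongrightarrow> (1/2) ^ length w)"

text \<open>Random set of primes: independent fair coins indexed by nat; prime p is in Q iff coin p is True.\<close>
definition coin_space :: "(nat \<Rightarrow> bool) measure" where
  "coin_space = PiM UNIV (\<lambda>_. measure_pmf (bernoulli_pmf (1/2)))"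

definition primes_of :: "(nat \<Rightarrow> bool) \<Rightarrow> nat set" where
  "primes_of \<omega> = {p. prime p \<and> \<omega> p}"

end

theory Submission
  imports Defs "HOL-Computational_Algebra.Squarefree" "HOL-Real_Asymp.Real_Asymp"
begin


definition sgnb :: "nat set \<Rightarrow> nat \<Rightarrow> int" where
  "sgnb Q p = (if p \<in> Q then -1 else 1)"

lemma lambdaQ_pm: "lambdaQ Q n = 1 \<or> lambdaQ Q n = -1"
proof -
  have "\<bar>lambdaQ Q n\<bar> = 1" unfolding lambdaQ_def abs_prod
    by (intro prod.neutral) (simp add: power_abs)
  then show ?thesis by auto
qed

lemma sqf_inj:
  fixes m n :: nat
  assumes "m > 0" "n > 0" "prime_factors (squarefree_part m) = prime_factors (squarefree_part n)"
    "square_part m = square_part n"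
  shows "m = n"
proof (rule squarefree_decomposition_unique[OF assms(4)])
  have "normalize (squarefree_part m) = normalize (squarefree_part n)"
  proof (rule multiplicity_eq_imp_eq)
    fix p :: nat assume p: "prime p"
    have "multiplicity p (squarefree_part m) \<le> 1" "multiplicity p (squarefree_part n) \<le> 1"
      using p by auto
    moreover have "p \<in> prime_factors (squarefree_part m) \<longleftrightarrow> multiplicity p (squarefree_part m) > 0"
      "p \<in> prime_factors (squarefree_part n) \<longleftrightarrow> multiplicity p (squarefree_part n) > 0"
      using p by (auto simp: prime_factors_multiplicity)
    moreover have "p \<in> prime_factors (squarefree_part m) \<longleftrightarrow> p \<in> prime_factors (squarefree_part n)"
      using assms(3) by simp
    ultimately show "multiplicity p (squarefree_part m) = multiplicity p (squarefree_part n)"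
      by linarith
  qed auto
  then show "squarefree_part m = squarefree_part n" by simp
qed

lemma card_sq_le: "real (card {a::nat. a^2 \<le> X}) \<le> sqrt (real X) + 1"
proof -
  have sub: "{a::nat. a^2 \<le> X} \<subseteq> {..nat \<lfloor>sqrt (real X)\<rfloor>}"
  proof
    fix a :: nat assume "a \<in> {a. a^2 \<le> X}"
    then have "a^2 \<le> X" by simp
    then have "real (a^2) \<le> real X" by (simp only: of_nat_le_iff)
    then have "real a ^2 \<le> real X" by simp
    then have "real a \<le> sqrt (real X)" using real_le_rsqrt by blast
    then show "a \<in> {..nat \<lfloor>sqrt (real X)\<rfloor>}" by (simp add: le_nat_floor)
  qed
  have "card {a::nat. a^2 \<le> X} \<le> card {..nat \<lfloor>sqrt (real X)\<rfloor>}"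
    by (rule card_mono[OF _ sub]) simp
  then have "card {a::nat. a^2 \<le> X} \<le> nat \<lfloor>sqrt (real X)\<rfloor> + 1" by simp
  then have "real (card {a::nat. a^2 \<le> X}) \<le> real (nat \<lfloor>sqrt (real X)\<rfloor> + 1)" by (simp only: of_nat_le_iff)
  also have "\<dots> = real_of_int \<lfloor>sqrt (real X)\<rfloor> + 1" by simp
  also have "\<dots> \<le> sqrt (real X) + 1" by simp
  finally show ?thesis .
qed

definition PS :: "nat set \<Rightarrow> nat \<Rightarrow> nat" where
  "PS S i = (\<Prod>j\<in>S. i + j)"

definition good :: "nat set \<Rightarrow> nat \<Rightarrow> nat \<Rightarrow> bool" where
  "good S i i' \<longleftrightarrow> (\<forall>q. prime q \<longrightarrow> even (multiplicity q (PS S i * PS S i')))"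

lemma PS_pos: "i > 0 \<Longrightarrow> PS S i > 0"
  unfolding PS_def by (cases "finite S") auto

lemma mult_PS:
  assumes S: "finite S" "S \<subseteq> {..<k}" "j0 \<in> S" and p: "prime p" "k \<le> p" and i: "i > 0"
    and pd: "p dvd i + j0"
  shows "multiplicity p (PS S i) = multiplicity p (i + j0)"
proof -
  have "PS S i = (i + j0) * (\<Prod>j\<in>S - {j0}. i + j)"
    unfolding PS_def using S by (simp add: prod.remove)
  moreover have nd: "\<not> p dvd (\<Prod>j\<in>S - {j0}. i + j)"
  proof
    assume "p dvd (\<Prod>j\<in>S - {j0}. i + j)"
    then obtain j where j: "j \<in> S - {j0}" "p dvd i + j"
      using p S by (auto simp: prime_dvd_prod_iff)
    have "j < k" "j0 < k" using j S by auto
    show False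
    proof (cases "j < j0")
      case True
      have "p dvd (i + j0) - (i + j)" by (rule dvd_diff_nat) (use j pd in auto)
      moreover have "(i + j0) - (i + j) = j0 - j" by simp
      ultimately have "p dvd j0 - j" by simp
      then have "p \<le> j0 - j" using True by (intro dvd_imp_le) auto
      then show False using \<open>j0 < k\<close> p by linarith
    next
      case False
      then have "j0 < j" using j by auto
      have "p dvd (i + j) - (i + j0)" by (rule dvd_diff_nat) (use j pd in auto)
      moreover have "(i + j) - (i + j0) = j - j0" by simp
      ultimately have "p dvd j - j0" by simp
      then have "p \<le> j - j0" using \<open>j0 < j\<close> by (intro dvd_imp_le) auto
      then show False using \<open>j < k\<close> p by linarith
    qed
  qed
  moreover have "(\<Prod>j\<in>S - {j0}. i + j) \<noteq> 0" using S i by auto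
  ultimately have "multiplicity p (PS S i) = multiplicity p (i + j0) + multiplicity p (\<Prod>j\<in>S - {j0}. i + j)"
    using p i by (simp add: prime_elem_multiplicity_mult_distrib)
  moreover have "multiplicity p (\<Prod>j\<in>S - {j0}. i + j) = 0"
    by (rule not_dvd_imp_multiplicity_0) (rule nd)
  ultimately show ?thesis by simp
qed

lemma count_fixed:
  assumes S: "finite S" "S \<subseteq> {..<k}" "j0 \<in> S" and i': "i' > 0"
  shows "real (card {i\<in>{1..N}. good S i i'}) \<le> 2 ^ (card (prime_factors (PS S i')) + k) * (sqrt (real (N + k)) + 1)"
proof -
  define PI where "PI = prime_factors (PS S i') \<union> {..<k}"
  define \<phi> where "\<phi> i = (prime_factors (squarefree_part (i + j0)), square_part (i + j0))" for i
  have j0k: "j0 < k" using S by auto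
  have inj: "inj_on \<phi> {i\<in>{1..N}. good S i i'}"
  proof (rule inj_onI)
    fix x y assume xy: "x \<in> {i\<in>{1..N}. good S i i'}" "y \<in> {i\<in>{1..N}. good S i i'}" "\<phi> x = \<phi> y"
    have e: "prime_factors (squarefree_part (x + j0)) = prime_factors (squarefree_part (y + j0))"
      "square_part (x + j0) = square_part (y + j0)"
      using xy(3) unfolding \<phi>_def by simp_all
    have "x \<ge> 1" "y \<ge> 1" using xy(1,2) by simp_all
    then have "x + j0 = y + j0" using sqf_inj[OF _ _ e] by simp
    then show "x = y" by simp
  qed
  have img: "\<phi> ` {i\<in>{1..N}. good S i i'} \<subseteq> Pow PI \<times> {a. a^2 \<le> N + k}"
  proof
    fix x assume "x \<in> \<phi> ` {i\<in>{1..N}. good S i i'}"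
    then obtain i where i: "i \<in> {1..N}" "good S i i'" and x: "x = \<phi> i" by auto
    have "prime_factors (squarefree_part (i + j0)) \<subseteq> PI"
    proof
      fix p assume p: "p \<in> prime_factors (squarefree_part (i + j0))"
      then have pp: "prime p" by auto
      have "multiplicity p (squarefree_part (i + j0)) > 0"
        using p by (auto simp: prime_factors_multiplicity)
      then have odd: "odd (multiplicity p (i + j0))"
        using pp by (simp add: prime_multiplicity_squarefree_part odd_iff_mod_2_eq_one)
      have m0: "multiplicity p (i + j0) \<noteq> 0"
      proof
        assume "multiplicity p (i + j0) = 0"
        with odd show False by simp
      qed
      have pd: "p dvd i + j0"
      proof (rule ccontr)
        assume "\<not> p dvd i + j0"
        then have "multiplicity p (i + j0) = 0" by (rule not_dvd_imp_multiplicity_0)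
        with m0 show False by simp
      qed
      show "p \<in> PI"
      proof (cases "p < k")
        case True then show ?thesis by (simp add: PI_def)
      next
        case False
        have m: "multiplicity p (PS S i) = multiplicity p (i + j0)"
          using mult_PS[OF S pp _ _ pd] False i by auto
        have "even (multiplicity p (PS S i * PS S i'))" using i(2) pp by (simp add: good_def)
        moreover have "multiplicity p (PS S i * PS S i') = multiplicity p (PS S i) + multiplicity p (PS S i')"
          using PS_pos[of i S] PS_pos[OF i'] i pp by (simp add: prime_elem_multiplicity_mult_distrib)
        ultimately have "odd (multiplicity p (PS S i'))" using odd m by auto
        then have "multiplicity p (PS S i') > 0" by (intro gr0I) auto
        then show ?thesis using pp PS_pos[OF i'] by (auto simp: PI_def prime_factors_multiplicity)
      qed
    qed
    moreover have "square_part (i + j0) ^ 2 \<le> N + k"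
    proof -
      have "square_part (i + j0) ^ 2 \<le> i + j0" using i by (intro dvd_imp_le) auto
      then show ?thesis using i j0k by auto
    qed
    ultimately show "x \<in> Pow PI \<times> {a. a^2 \<le> N + k}" by (simp add: x \<phi>_def)
  qed
  have finPI: "finite PI" by (simp add: PI_def)
  have finA: "finite {a::nat. a^2 \<le> N + k}"
    by (rule finite_subset[of _ "{..N+k}"]) (auto simp: power2_eq_square intro: order_trans[OF le_square])
  have "card {i\<in>{1..N}. good S i i'} \<le> card (Pow PI \<times> {a. a^2 \<le> N + k})"
    by (rule card_inj_on_le[OF inj img]) (simp add: finPI finA)
  also have "\<dots> = 2 ^ card PI * card {a::nat. a^2 \<le> N + k}"
    using finPI by (simp add: card_cartesian_product card_Pow)
  finally have c: "real (card {i\<in>{1..N}. good S i i'}) \<le> 2 ^ card PI * real (card {a::nat. a^2 \<le> N + k})"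
    unfolding of_nat_le_iff[symmetric, where 'a=real] by simp
  have "card PI \<le> card (prime_factors (PS S i')) + k"
    unfolding PI_def by (rule order_trans[OF card_Un_le]) simp
  then have "(2::real) ^ card PI \<le> 2 ^ (card (prime_factors (PS S i')) + k)"
    by (intro power_increasing) auto
  then have "(2::real) ^ card PI * real (card {a::nat. a^2 \<le> N + k}) \<le> 2 ^ (card (prime_factors (PS S i')) + k) * (sqrt (real (N + k)) + 1)"
    by (rule mult_mono[OF _ card_sq_le]) auto
  then show ?thesis using c by linarith
qed



lemma fact_le_prod:
  fixes F :: "nat set"
  shows "finite F \<Longrightarrow> 0 \<notin> F \<Longrightarrow> fact (card F) \<le> \<Prod>F"
proof (induction "card F" arbitrary: F)
  case 0
  then show ?case by simp
next
  case (Suc n)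
  then have ne: "F \<noteq> {}" by auto
  define m where "m = Max F"
  have mF: "m \<in> F" unfolding m_def by (rule Max_in[OF Suc.prems(1) ne])
  have sub: "F \<subseteq> {1..m}"
  proof
    fix x assume "x \<in> F"
    then have "x \<le> m" unfolding m_def using Suc.prems by auto
    moreover have "x \<noteq> 0"
    proof
      assume "x = 0"
      with \<open>x \<in> F\<close> Suc.prems(2) show False by simp
    qed
    ultimately show "x \<in> {1..m}" by simp
  qed
  have "card F \<le> card {1..m}" by (rule card_mono[OF _ sub]) simp
  then have cm: "card F \<le> m" by simp
  have cF: "card (F - {m}) = n" using Suc.hyps(2) mF Suc.prems by simp
  have IH: "fact n \<le> \<Prod>(F - {m})"
    using Suc.hyps(1)[of "F - {m}"] cF Suc.prems by simp
  have "fact (card F) = card F * (fact n :: nat)" using Suc.hyps(2)[symmetric] by simp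
  also have "\<dots> \<le> m * \<Prod>(F - {m})" by (rule mult_le_mono[OF cm IH])
  also have "\<dots> = \<Prod>F" using Suc.prems mF by (simp add: prod.remove)
  finally show ?case .
qed

lemma prod_pf_le:
  fixes n :: nat
  assumes "n > 0"
  shows "\<Prod>(prime_factors n) \<le> n"
proof -
  have "\<Prod>(prime_factors n) \<le> (\<Prod>p\<in>prime_factors n. p ^ multiplicity p n)"
  proof (rule prod_mono)
    fix p assume p: "p \<in> prime_factors n"
    then have "multiplicity p n \<ge> 1" using assms by (simp add: prime_factors_multiplicity)
    moreover have "prime p" using p by auto
    then have "p > 0" by (rule prime_gt_0_nat)
    ultimately have "p ^ 1 \<le> p ^ multiplicity p n" by (intro power_increasing) auto
    then show "0 \<le> p \<and> p \<le> p ^ multiplicity p n" by simp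
  qed
  also have "\<dots> = n" using prime_factorization_nat[OF assms] by simp
  finally show ?thesis .
qed

lemma pow_le_fact: "(B::nat) ^ t \<le> B ^ B * fact t"
proof (induction t)
  case 0
  have "B ^ B \<ge> 1" by (cases "B = 0") auto
  then show ?case by simp
next
  case (Suc t)
  show ?case
  proof (cases "B \<le> Suc t")
    case True
    have "B ^ Suc t = B * B ^ t" by simp
    also have "\<dots> \<le> Suc t * (B ^ B * fact t)" by (rule mult_le_mono[OF True Suc.IH])
    also have "\<dots> = B ^ B * fact (Suc t)" by (simp add: fact_Suc algebra_simps)
    finally show ?thesis .
  next
    case False
    then have "B ^ Suc t \<le> B ^ B" by (intro power_increasing) auto
    also have "\<dots> \<le> B ^ B * fact (Suc t)"
      by (metis mult.right_neutral mult_le_mono2 fact_ge_1)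
    finally show ?thesis .
  qed
qed

lemma PS_le:
  assumes "finite S" "S \<subseteq> {..<k}" "i \<le> N"
  shows "PS S i \<le> (N + k) ^ k"
proof -
  have "PS S i \<le> (\<Prod>j\<in>S. N + k)" unfolding PS_def
    by (rule prod_mono) (use assms in auto)
  also have "\<dots> = (N + k) ^ card S" by simp
  also have "\<dots> \<le> (N + k) ^ k"
  proof (cases "S = {}")
    case True
    have "1 \<le> (N + k) ^ k"
    proof (cases "k = 0")
      case False
      then have "1 \<le> N + k" by simp
      then show ?thesis by (rule one_le_power)
    qed simp
    then show ?thesis using True by simp
  next
    case False
    then have "k > 0" using assms by auto
    have "card S \<le> card {..<k}" by (rule card_mono) (use assms in auto)
    then show ?thesis using \<open>k > 0\<close> by (intro power_increasing) auto
  qed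
  finally show ?thesis .
qed

definition Kc :: "nat \<Rightarrow> real" where
  "Kc k = real ((2 ^ (4*k)) ^ (2 ^ (4*k)) :: nat) powr (1 / real (4*k))"

lemma omega_bound:
  assumes S: "finite S" "S \<subseteq> {..<k}" and k: "k > 0" and i': "i' > 0" "i' \<le> N"
  shows "(2::real) ^ card (prime_factors (PS S i')) \<le> Kc k * real (N + k) powr (1/4)"
proof -
  define t where "t = card (prime_factors (PS S i'))"
  define B :: nat where "B = 2 ^ (4*k)"
  have "fact t \<le> \<Prod>(prime_factors (PS S i'))"
    unfolding t_def by (rule fact_le_prod) auto
  also have "\<dots> \<le> PS S i'" by (rule prod_pf_le[OF PS_pos[OF i'(1)]])
  also have "\<dots> \<le> (N + k) ^ k" by (rule PS_le[OF S i'(2)])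
  finally have ft: "fact t \<le> (N + k) ^ k" .
  have "B ^ t \<le> B ^ B * fact t" by (rule pow_le_fact)
  also have "\<dots> \<le> B ^ B * (N + k) ^ k" using ft by simp
  finally have "B ^ t \<le> B ^ B * (N + k) ^ k" .
  then have r: "real (B ^ t) \<le> real (B ^ B) * real (N + k) ^ k"
    by (metis of_nat_le_iff of_nat_mult of_nat_power)
  have "real (B ^ t) = ((2::real) ^ t) ^ (4*k)"
    by (simp add: B_def power_mult[symmetric] mult.commute)
  with r have r2: "((2::real) ^ t) ^ (4*k) \<le> real (B ^ B) * real (N + k) ^ k" by simp
  have pos: "(0::real) < 2 ^ t" by simp
  have "(2::real) ^ t = (((2::real) ^ t) ^ (4*k)) powr (1 / real (4*k))"
    using pos k by (simp add: powr_realpow[symmetric] powr_powr)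
  also have "\<dots> \<le> (real (B ^ B) * real (N + k) ^ k) powr (1 / real (4*k))"
    by (rule powr_mono2) (use r2 in auto)
  also have "\<dots> = real (B ^ B) powr (1 / real (4*k)) * (real (N + k) ^ k) powr (1 / real (4*k))"
    by (rule powr_mult)
  also have "(real (N + k) ^ k) powr (1 / real (4*k)) = real (N + k) powr (1/4)"
  proof -
    have "real (N + k) > 0" using k by simp
    then have "(real (N + k) ^ k) powr (1 / real (4*k)) = real (N + k) powr (real k * (1 / real (4*k)))"
      by (simp add: powr_realpow[symmetric] powr_powr)
    also have "real k * (1 / real (4*k)) = 1/4" using k by simp
    finally show ?thesis .
  qed
  finally show ?thesis by (simp add: Kc_def B_def t_def)
qed



lemma total_count:
  assumes S: "finite S" "S \<subseteq> {..<k}" "j0 \<in> S"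
  shows "\<exists>C. \<forall>N\<ge>1. (\<Sum>i'\<in>{1..N}. real (card {i\<in>{1..N}. good S i i'})) \<le> C * real N powr (7/4)"
proof -
  have k: "k > 0" using S by auto
  define D where "D = 2 ^ k * Kc k * ((real (k+1)) powr (1/4) * (2 * sqrt (real (k+1))))"
  have Kpos: "Kc k \<ge> 0" unfolding Kc_def by simp
  have termb: "real (card {i\<in>{1..N}. good S i i'}) \<le> D * real N powr (3/4)"
    if N: "N \<ge> 1" and i': "i' \<in> {1..N}" for N i'
  proof -
    have i'p: "i' > 0" "i' \<le> N" using i' by auto
    have "k * 1 \<le> k * N" using N by (rule mult_le_mono2)
    then have "N + k \<le> (k+1) * N" by simp
    then have "real (N + k) \<le> real ((k+1) * N)" by (simp only: of_nat_le_iff)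
    then have Nk: "real (N + k) \<le> real (k+1) * real N" by (simp only: of_nat_mult)
    have A: "real (N + k) powr (1/4) \<le> real (k+1) powr (1/4) * real N powr (1/4)"
    proof -
      have "real (N + k) powr (1/4) \<le> (real (k+1) * real N) powr (1/4)"
        by (rule powr_mono2) (use Nk in auto)
      also have "\<dots> = real (k+1) powr (1/4) * real N powr (1/4)" by (rule powr_mult)
      finally show ?thesis .
    qed
    have B: "sqrt (real (N + k)) + 1 \<le> 2 * sqrt (real (k+1)) * real N powr (1/2)"
    proof -
      have "sqrt (real (N + k)) \<le> sqrt (real (k+1) * real N)" using Nk by simp
      also have "\<dots> = sqrt (real (k+1)) * real N powr (1/2)"
        by (simp add: real_sqrt_mult powr_half_sqrt)
      finally have 1: "sqrt (real (N + k)) \<le> sqrt (real (k+1)) * real N powr (1/2)" .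
      have "1 \<le> sqrt (real (k+1)) * real N powr (1/2)"
      proof -
        have "1 \<le> sqrt (real (k+1))" by simp
        moreover have "1 \<le> real N powr (1/2)" using N by (simp add: ge_one_powr_ge_zero)
        ultimately show ?thesis by (metis mult_mono mult_1 zero_le_one order_trans)
      qed
      with 1 show ?thesis by simp
    qed
    have "real (card {i\<in>{1..N}. good S i i'}) \<le> 2 ^ (card (prime_factors (PS S i')) + k) * (sqrt (real (N + k)) + 1)"
      by (rule count_fixed[OF S i'p(1)])
    also have "\<dots> = 2 ^ k * 2 ^ card (prime_factors (PS S i')) * (sqrt (real (N + k)) + 1)"
      by (simp add: power_add)
    also have "\<dots> \<le> 2 ^ k * (Kc k * real (N + k) powr (1/4)) * (sqrt (real (N + k)) + 1)"
      by (intro mult_right_mono mult_left_mono omega_bound[OF S(1,2) k i'p]) auto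
    also have "\<dots> \<le> 2 ^ k * (Kc k * (real (k+1) powr (1/4) * real N powr (1/4))) * (2 * sqrt (real (k+1)) * real N powr (1/2))"
      by (intro mult_mono mult_left_mono A B Kpos) (auto simp: Kpos)
    also have "\<dots> = D * (real N powr (1/4) * real N powr (1/2))"
      by (simp add: D_def algebra_simps)
    also have "real N powr (1/4) * real N powr (1/2) = real N powr (3/4)"
      by (simp add: powr_add[symmetric])
    finally show ?thesis .
  qed
  show ?thesis
  proof (intro exI allI impI)
    fix N :: nat assume N: "N \<ge> 1"
    have "(\<Sum>i'\<in>{1..N}. real (card {i\<in>{1..N}. good S i i'})) \<le> (\<Sum>i'\<in>{1..N}. D * real N powr (3/4))"
      by (rule sum_mono) (rule termb[OF N])
    also have "\<dots> = D * (real N * real N powr (3/4))" by simp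
    also have "real N * real N powr (3/4) = real N powr (7/4)"
    proof -
      have "real N powr 1 * real N powr (3/4) = real N powr (1 + 3/4)" by (rule powr_add[symmetric])
      moreover have "real N powr 1 = real N" using N by simp
      moreover have "(1::real) + 3/4 = 7/4" by simp
      ultimately show ?thesis by simp
    qed
    finally show "(\<Sum>i'\<in>{1..N}. real (card {i\<in>{1..N}. good S i i'})) \<le> D * real N powr (7/4)" .
  qed
qed



abbreviation Bm :: "bool measure" where "Bm \<equiv> measure_pmf (bernoulli_pmf (1/2))"

interpretation CP: product_prob_space "\<lambda>_::nat. Bm" "UNIV :: nat set"
  by unfold_locales (auto intro: prob_space_measure_pmf)

lemma coin_eq: "coin_space = PiM UNIV (\<lambda>_::nat. Bm)"
  by (simp add: coin_space_def)

interpretation CS: prob_space coin_space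
  unfolding coin_eq by (rule CP.P.prob_space_axioms)

lemma space_coin[simp]: "space coin_space = UNIV"
  unfolding coin_eq by (auto simp: space_PiM)

lemma space_PiBm[simp]: "space (PiM UNIV (\<lambda>_::nat. Bm)) = UNIV"
  by (auto simp: space_PiM)

lemma comp_meas[measurable]: "(\<lambda>\<omega>. g (\<omega> p) :: real) \<in> borel_measurable coin_space"
proof -
  have "(\<lambda>\<omega>. \<omega> p) \<in> coin_space \<rightarrow>\<^sub>M Bm"
    unfolding coin_eq by (rule measurable_component_singleton) simp
  moreover have "g \<in> Bm \<rightarrow>\<^sub>M borel" by simp
  ultimately show ?thesis by (rule measurable_compose)
qed

lemma bern_sym: "emeasure Bm {b. (\<not> b) \<in> X} = emeasure Bm X"
proof -
  have e: "{b. (\<not> b) \<in> X} = Not ` X"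
  proof (rule set_eqI)
    fix b show "b \<in> {b. (\<not> b) \<in> X} \<longleftrightarrow> b \<in> Not ` X"
      by (cases b) (auto simp: image_iff)
  qed
  have pm: "pmf (bernoulli_pmf (1/2)) b = 1/2" for b by (cases b) simp_all
  have "emeasure Bm {b. (\<not> b) \<in> X} = (\<Sum>s\<in>Not ` X. pmf (bernoulli_pmf (1/2)) s)"
    unfolding e by (rule emeasure_measure_pmf_finite) simp
  also have "\<dots> = (\<Sum>s\<in>X. pmf (bernoulli_pmf (1/2)) s)"
  proof -
    have "card (Not ` X) = card X" by (rule card_image) (simp add: inj_on_def)
    then show ?thesis by (simp add: pm)
  qed
  also have "\<dots> = emeasure Bm X"
    by (rule emeasure_measure_pmf_finite[symmetric]) simp
  finally show ?thesis .
qed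

definition flipw :: "nat \<Rightarrow> (nat \<Rightarrow> bool) \<Rightarrow> (nat \<Rightarrow> bool)" where
  "flipw q \<omega> = (\<lambda>i. if i = q then \<not> \<omega> q else \<omega> i)"

lemma flip_meas: "flipw q \<in> coin_space \<rightarrow>\<^sub>M coin_space"
proof -
  have "flipw q = (\<lambda>\<omega> i. (if i = q then Not else id) (\<omega> i))"
    by (auto simp: flipw_def fun_eq_iff)
  also have "\<dots> \<in> coin_space \<rightarrow>\<^sub>M coin_space"
    unfolding coin_eq
  proof (rule measurable_PiM_single')
    fix i :: nat
    have "(\<lambda>\<omega>. \<omega> i) \<in> PiM UNIV (\<lambda>_::nat. Bm) \<rightarrow>\<^sub>M Bm"
      by (rule measurable_component_singleton) simp
    moreover have "(if i = q then Not else id) \<in> Bm \<rightarrow>\<^sub>M Bm" by simp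
    ultimately show "(\<lambda>\<omega>. (if i = q then Not else id) (\<omega> i)) \<in> PiM UNIV (\<lambda>_::nat. Bm) \<rightarrow>\<^sub>M Bm"
      by (rule measurable_compose)
  qed (auto simp: space_PiM)
  finally show ?thesis .
qed

lemma flip_inv: "distr coin_space coin_space (flipw q) = coin_space"
proof -
  have "distr coin_space coin_space (flipw q) = PiM UNIV (\<lambda>_::nat. Bm)"
  proof (rule CP.PiM_eq)
    show "sets (distr coin_space coin_space (flipw q)) = sets (PiM UNIV (\<lambda>_::nat. Bm))"
      by (simp add: coin_eq)
  next
    fix J :: "nat set" and F assume J: "finite J" "J \<subseteq> UNIV" and F: "\<And>j. j \<in> J \<Longrightarrow> F j \<in> sets Bm"
    define G where "G j = (if j = q then {b. (\<not> b) \<in> F q} else F j)" for j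
    have E: "prod_emb UNIV (\<lambda>_::nat. Bm) J (Pi\<^sub>E J F) = {x\<in>space (PiM UNIV (\<lambda>_::nat. Bm)). \<forall>j\<in>J. x j \<in> F j}"
      by (auto simp: prod_emb_def space_PiM PiE_iff)
    have set: "prod_emb UNIV (\<lambda>_::nat. Bm) J (Pi\<^sub>E J F) \<in> sets coin_space"
      unfolding coin_eq by (rule sets_PiM_I) (use J F in auto)
    have pre: "flipw q -` prod_emb UNIV (\<lambda>_::nat. Bm) J (Pi\<^sub>E J F) \<inter> space coin_space
       = {x\<in>space (PiM UNIV (\<lambda>_::nat. Bm)). \<forall>j\<in>J. x j \<in> G j}"
    proof -
      have key: "(flipw q x j \<in> F j) = (x j \<in> G j)" for x j
        by (cases "j = q") (simp_all add: flipw_def G_def)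
      show ?thesis unfolding E space_coin space_PiBm by (simp add: key)
    qed
    have "emeasure (distr coin_space coin_space (flipw q)) (prod_emb UNIV (\<lambda>_::nat. Bm) J (Pi\<^sub>E J F))
        = emeasure coin_space (flipw q -` prod_emb UNIV (\<lambda>_::nat. Bm) J (Pi\<^sub>E J F) \<inter> space coin_space)"
      by (rule emeasure_distr[OF flip_meas set])
    also have "\<dots> = emeasure coin_space {x\<in>space (PiM UNIV (\<lambda>_::nat. Bm)). \<forall>j\<in>J. x j \<in> G j}"
      by (simp only: pre)
    also have "\<dots> = (\<Prod>j\<in>J. emeasure Bm (G j))"
      unfolding coin_eq by (rule CP.emeasure_PiM_Collect) (use J in auto)
    also have "\<dots> = (\<Prod>j\<in>J. emeasure Bm (F j))"
    proof (rule prod.cong[OF refl])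
      fix j show "emeasure Bm (G j) = emeasure Bm (F j)"
      proof (cases "j = q")
        case True
        then have "G j = {b. (\<not> b) \<in> F j}" by (simp add: G_def)
        then show ?thesis by (simp only: bern_sym)
      next
        case False
        then have "G j = F j" by (simp add: G_def)
        then show ?thesis by simp
      qed
    qed
    finally show "emeasure (distr coin_space coin_space (flipw q)) (prod_emb UNIV (\<lambda>_::nat. Bm) J (Pi\<^sub>E J F))
        = (\<Prod>j\<in>J. emeasure Bm (F j))" .
  qed
  then show ?thesis by (simp add: coin_eq)
qed

definition lamR :: "(nat \<Rightarrow> bool) \<Rightarrow> nat \<Rightarrow> real" where
  "lamR \<omega> n = real_of_int (lambdaQ (primes_of \<omega>) n)"

lemma lamR_alt: "lamR \<omega> n = (\<Prod>p\<in>prime_factors n. (if \<omega> p then -1 else 1) ^ multiplicity p n)"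
  unfolding lamR_def lambdaQ_def primes_of_def of_int_prod
  by (intro prod.cong refl) auto

lemma lamR_meas[measurable]: "(\<lambda>\<omega>. lamR \<omega> n) \<in> borel_measurable coin_space"
  unfolding lamR_alt by (intro borel_measurable_prod comp_meas)

lemma lamR_pm: "lamR \<omega> n = 1 \<or> lamR \<omega> n = -1"
  unfolding lamR_def using lambdaQ_pm[of "primes_of \<omega>" n] by auto

lemma lamR_abs: "\<bar>lamR \<omega> n\<bar> \<le> 1"
  using lamR_pm[of \<omega> n] by auto

lemma lamR_flip:
  assumes "prime q" "odd (multiplicity q n)"
  shows "lamR (flipw q \<omega>) n = - lamR \<omega> n"
proof -
  have n: "n \<noteq> 0" using assms(2) by (intro notI) simp
  have "multiplicity q n \<noteq> 0" using assms(2) by (intro notI) simp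
  then have q: "q \<in> prime_factors n" using assms(1) n
    by (simp add: prime_factors_multiplicity)
  let ?g = "\<lambda>\<omega> p. (if \<omega> p then -1 else (1::real)) ^ multiplicity p n"
  have "lamR (flipw q \<omega>) n = ?g (flipw q \<omega>) q * (\<Prod>p\<in>prime_factors n - {q}. ?g (flipw q \<omega>) p)"
    unfolding lamR_alt using q by (simp add: prod.remove)
  also have "(\<Prod>p\<in>prime_factors n - {q}. ?g (flipw q \<omega>) p) = (\<Prod>p\<in>prime_factors n - {q}. ?g \<omega> p)"
    by (intro prod.cong refl) (auto simp: flipw_def)
  also have "?g (flipw q \<omega>) q = - ?g \<omega> q"
  proof -
    have "flipw q \<omega> q = (\<not> \<omega> q)" by (simp add: flipw_def)
    then show ?thesis using assms(2) by (cases "\<omega> q") simp_all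
  qed
  also have "- ?g \<omega> q * (\<Prod>p\<in>prime_factors n - {q}. ?g \<omega> p) = - lamR \<omega> n"
    unfolding lamR_alt using q by (simp add: prod.remove)
  finally show ?thesis .
qed

lemma exp_lamR_zero:
  assumes "prime q" "odd (multiplicity q n)"
  shows "CS.expectation (\<lambda>\<omega>. lamR \<omega> n) = 0"
proof -
  have "CS.expectation (\<lambda>\<omega>. lamR \<omega> n) = integral\<^sup>L (distr coin_space coin_space (flipw q)) (\<lambda>\<omega>. lamR \<omega> n)"
    by (simp add: flip_inv)
  also have "\<dots> = CS.expectation (\<lambda>\<omega>. lamR (flipw q \<omega>) n)"
    by (rule integral_distr[OF flip_meas]) simp
  also have "\<dots> = - CS.expectation (\<lambda>\<omega>. lamR \<omega> n)"
    by (simp add: lamR_flip[OF assms])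
  finally show ?thesis by simp
qed

lemma lamR_int: "integrable coin_space (\<lambda>\<omega>. lamR \<omega> n)"
  by (rule CS.integrable_const_bound[where B=1]) (simp_all add: lamR_abs)

lemma exp_lamR_le: "CS.expectation (\<lambda>\<omega>. lamR \<omega> n) \<le> 1"
proof -
  have "CS.expectation (\<lambda>\<omega>. lamR \<omega> n) \<le> CS.expectation (\<lambda>\<omega>. 1)"
  proof (rule integral_mono[OF lamR_int])
    fix x show "lamR x n \<le> 1" using lamR_abs[of x n] by simp
  qed simp
  then show ?thesis using CS.prob_space by simp
qed



definition fS :: "nat set \<Rightarrow> (nat \<Rightarrow> bool) \<Rightarrow> nat \<Rightarrow> real" where
  "fS S \<omega> i = (\<Prod>j\<in>S. lamR \<omega> (i + j))"

definition XS :: "nat set \<Rightarrow> (nat \<Rightarrow> bool) \<Rightarrow> nat \<Rightarrow> real" where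
  "XS S \<omega> N = (\<Sum>i\<in>{1..N}. fS S \<omega> i)"

lemma lambdaQ_superset:
  assumes "finite F" "prime_factors n \<subseteq> F" "\<forall>p\<in>F. prime p"
  shows "lambdaQ Q n = (\<Prod>p\<in>F. sgnb Q p ^ multiplicity p n)"
proof -
  have "(\<Prod>p\<in>F. sgnb Q p ^ multiplicity p n) = (\<Prod>p\<in>prime_factors n. sgnb Q p ^ multiplicity p n)"
  proof (rule prod.mono_neutral_right[OF assms(1) assms(2)])
    show "\<forall>i\<in>F - prime_factors n. sgnb Q i ^ multiplicity i n = 1"
      using assms(3) by (auto simp: not_dvd_imp_multiplicity_0 prime_factors_multiplicity)
  qed
  then show ?thesis unfolding lambdaQ_def sgnb_def by simp
qed

lemma lambdaQ_mult:
  assumes "n > 0" "m > 0"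
  shows "lambdaQ Q (n*m) = lambdaQ Q n * lambdaQ Q m"
proof -
  let ?F = "prime_factors (n*m)"
  have F: "prime_factors n \<subseteq> ?F" "prime_factors m \<subseteq> ?F"
    using assms by (auto simp: prime_factors_product)
  have "lambdaQ Q (n*m) = (\<Prod>p\<in>?F. sgnb Q p ^ multiplicity p (n*m))"
    by (rule lambdaQ_superset) auto
  also have "\<dots> = (\<Prod>p\<in>?F. sgnb Q p ^ multiplicity p n * sgnb Q p ^ multiplicity p m)"
  proof (intro prod.cong refl)
    fix x assume "x \<in> ?F"
    then have "prime x" by auto
    then have "multiplicity x (n*m) = multiplicity x n + multiplicity x m"
      using assms by (simp add: prime_elem_multiplicity_mult_distrib)
    then show "sgnb Q x ^ multiplicity x (n*m) = sgnb Q x ^ multiplicity x n * sgnb Q x ^ multiplicity x m"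
      by (simp add: power_add)
  qed
  also have "\<dots> = lambdaQ Q n * lambdaQ Q m"
  proof -
    have "lambdaQ Q n = (\<Prod>p\<in>?F. sgnb Q p ^ multiplicity p n)"
      by (rule lambdaQ_superset[OF _ F(1)]) auto
    moreover have "lambdaQ Q m = (\<Prod>p\<in>?F. sgnb Q p ^ multiplicity p m)"
      by (rule lambdaQ_superset[OF _ F(2)]) auto
    ultimately show ?thesis by (simp add: prod.distrib)
  qed
  finally show ?thesis .
qed

lemma lamR_mult: "a > 0 \<Longrightarrow> b > 0 \<Longrightarrow> lamR \<omega> (a * b) = lamR \<omega> a * lamR \<omega> b"
  unfolding lamR_def by (simp add: lambdaQ_mult)

lemma lamR_1[simp]: "lamR \<omega> (Suc 0) = 1"
  unfolding lamR_def lambdaQ_def by simp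

lemma fS_eq:
  assumes "finite S" "i > 0"
  shows "fS S \<omega> i = lamR \<omega> (PS S i)"
  using assms(1) unfolding fS_def PS_def
proof (induction S rule: finite_induct)
  case empty
  then show ?case by (simp add: lamR_1)
next
  case (insert x F)
  have pos: "(\<Prod>j\<in>F. i + j) > 0" using assms(2) insert.hyps(1) by (simp add: prod_pos)
  have "(\<Prod>j\<in>insert x F. lamR \<omega> (i + j)) = lamR \<omega> (i + x) * (\<Prod>j\<in>F. lamR \<omega> (i + j))"
    using insert.hyps by simp
  also have "\<dots> = lamR \<omega> (i + x) * lamR \<omega> (\<Prod>j\<in>F. i + j)" by (simp only: insert.IH)
  also have "\<dots> = lamR \<omega> ((i + x) * (\<Prod>j\<in>F. i + j))"
    using pos assms(2) by (simp add: lamR_mult)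
  also have "(i + x) * (\<Prod>j\<in>F. i + j) = (\<Prod>j\<in>insert x F. i + j)"
    using insert.hyps by simp
  finally show ?case .
qed

lemma fS_meas[measurable]: "(\<lambda>\<omega>. fS S \<omega> i) \<in> borel_measurable coin_space"
  unfolding fS_def by (intro borel_measurable_prod lamR_meas)

lemma XS_meas[measurable]: "(\<lambda>\<omega>. XS S \<omega> N) \<in> borel_measurable coin_space"
  unfolding XS_def by (intro borel_measurable_sum fS_meas)

lemma XS_sq:
  assumes "finite S"
  shows "(XS S \<omega> N)^2 = (\<Sum>i\<in>{1..N}. \<Sum>i'\<in>{1..N}. lamR \<omega> (PS S i * PS S i'))"
proof -
  have "(XS S \<omega> N)^2 = (\<Sum>i\<in>{1..N}. \<Sum>i'\<in>{1..N}. fS S \<omega> i * fS S \<omega> i')"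
    unfolding XS_def power2_eq_square by (rule sum_product)
  also have "\<dots> = (\<Sum>i\<in>{1..N}. \<Sum>i'\<in>{1..N}. lamR \<omega> (PS S i * PS S i'))"
  proof (intro sum.cong refl)
    fix i i' assume "i \<in> {1..N}" "i' \<in> {1..N}"
    then have "i > 0" "i' > 0" by auto
    then show "fS S \<omega> i * fS S \<omega> i' = lamR \<omega> (PS S i * PS S i')"
      using assms by (simp add: fS_eq lamR_mult PS_pos)
  qed
  finally show ?thesis .
qed

lemma exp_good:
  "CS.expectation (\<lambda>\<omega>. lamR \<omega> (PS S i * PS S i')) \<le> (if good S i i' then 1 else 0)"
proof (cases "good S i i'")
  case True
  then show ?thesis using exp_lamR_le by simp
next
  case False
  then obtain q where "prime q" "odd (multiplicity q (PS S i * PS S i'))"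
    unfolding good_def by blast
  then show ?thesis using exp_lamR_zero by simp
qed

lemma XS_sq_int: "integrable coin_space (\<lambda>\<omega>. (XS S \<omega> N)^2)"
proof (rule CS.integrable_const_bound[where B = "real N ^ 2"])
  show "AE x in coin_space. norm ((XS S x N)^2) \<le> real N ^ 2"
  proof (rule AE_I2)
    fix x
    have "\<bar>XS S x N\<bar> \<le> (\<Sum>i\<in>{1..N}. \<bar>fS S x i\<bar>)" unfolding XS_def by (rule sum_abs)
    also have "\<dots> \<le> (\<Sum>i\<in>{1..N}. 1)"
    proof (rule sum_mono)
      fix i
      have "\<bar>fS S x i\<bar> = (\<Prod>j\<in>S. \<bar>lamR x (i + j)\<bar>)" unfolding fS_def by (rule abs_prod)
      also have "\<dots> \<le> (\<Prod>j\<in>S. 1)" by (rule prod_mono) (simp add: lamR_abs)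
      finally show "\<bar>fS S x i\<bar> \<le> 1" by simp
    qed
    also have "\<dots> = real N" by simp
    finally have "\<bar>XS S x N\<bar> \<le> real N" .
    then have "\<bar>XS S x N\<bar>^2 \<le> real N ^ 2" by (intro power_mono) auto
    then show "norm ((XS S x N)^2) \<le> real N ^ 2" by simp
  qed
qed simp

lemma exp_XS_sq:
  assumes "finite S"
  shows "CS.expectation (\<lambda>\<omega>. (XS S \<omega> N)^2) \<le> (\<Sum>i'\<in>{1..N}. real (card {i\<in>{1..N}. good S i i'}))"
proof -
  have "CS.expectation (\<lambda>\<omega>. (XS S \<omega> N)^2)
      = CS.expectation (\<lambda>\<omega>. \<Sum>i\<in>{1..N}. \<Sum>i'\<in>{1..N}. lamR \<omega> (PS S i * PS S i'))"
    by (simp only: XS_sq[OF assms])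
  also have "\<dots> = (\<Sum>i\<in>{1..N}. \<Sum>i'\<in>{1..N}. CS.expectation (\<lambda>\<omega>. lamR \<omega> (PS S i * PS S i')))"
    by (simp add: Bochner_Integration.integral_sum lamR_int)
  also have "\<dots> \<le> (\<Sum>i\<in>{1..N}. \<Sum>i'\<in>{1..N}. (if good S i i' then 1 else 0))"
    by (intro sum_mono exp_good)
  also have "\<dots> = (\<Sum>i'\<in>{1..N}. \<Sum>i\<in>{1..N}. (if good S i i' then 1 else 0))"
    by (rule sum.swap)
  also have "\<dots> = (\<Sum>i'\<in>{1..N}. real (card {i\<in>{1..N}. good S i i'}))"
    by (intro sum.cong refl) (simp add: sum.If_cases Int_def)
  finally show ?thesis .
qed



lemma prob_bound:
  assumes S: "finite S" "S \<subseteq> {..<k}" "j0 \<in> S"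
  shows "\<exists>C. \<forall>N\<ge>1. \<forall>\<eta>>0. CS.prob {\<omega>. \<eta> * real N \<le> \<bar>XS S \<omega> N\<bar>} \<le> C / \<eta>^2 * real N powr (-1/4)"
proof -
  obtain C where C: "\<And>N. N \<ge> 1 \<Longrightarrow> (\<Sum>i'\<in>{1..N}. real (card {i\<in>{1..N}. good S i i'})) \<le> C * real N powr (7/4)"
    using total_count[OF S] by blast
  show ?thesis
  proof (intro exI allI impI)
    fix N :: nat and \<eta> :: real assume N: "N \<ge> 1" and \<eta>: "\<eta> > 0"
    have Npos: "real N > 0" using N by simp
    have a: "\<eta> * real N > 0" using N \<eta> by simp
    have "CS.prob {x\<in>space coin_space. \<bar>XS S x N\<bar> \<ge> \<eta> * real N}
        \<le> CS.expectation (\<lambda>x. (XS S x N)^2) / (\<eta> * real N)^2"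
      by (rule CS.second_moment_method[OF XS_meas XS_sq_int a])
    also have "\<dots> \<le> C * real N powr (7/4) / (\<eta> * real N)^2"
      by (intro divide_right_mono order_trans[OF exp_XS_sq[OF S(1)] C[OF N]]) simp
    also have "\<dots> = C / \<eta>^2 * (real N powr (7/4) / real N powr 2)"
      using Npos by (simp add: powr_realpow power_mult_distrib)
    also have "real N powr (7/4) / real N powr 2 = real N powr (-1/4)"
    proof -
      have e: "real N powr (7/4) / real N powr 2 = real N powr (7/4 - 2)" by (rule powr_diff[symmetric])
      have "(7/4::real) - 2 = -1/4" by simp
      with e show ?thesis by (simp only:)
    qed
    finally show "CS.prob {\<omega>. \<eta> * real N \<le> \<bar>XS S \<omega> N\<bar>} \<le> C / \<eta>^2 * real N powr (-1/4)"
      by simp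
  qed
qed

lemma summable_inv_sq: "summable (\<lambda>t::nat. inverse (real (Suc t) ^ 2))"
proof -
  have "summable (\<lambda>n::nat. inverse (of_nat n ^ 2 :: real))"
    by (rule inverse_power_summable) simp
  then show ?thesis
    using summable_Suc_iff[where f = "\<lambda>n::nat. inverse (of_nat n ^ 2 :: real)"] by simp
qed

lemma AE_sub:
  assumes S: "finite S" "S \<subseteq> {..<k}" "j0 \<in> S"
  shows "AE \<omega> in coin_space. \<forall>m::nat. eventually (\<lambda>t. \<bar>XS S \<omega> ((t+1)^8)\<bar> < (1 / real (m+1)) * real ((t+1)^8)) sequentially"
proof -
  obtain C where C: "\<And>N \<eta>. N \<ge> 1 \<Longrightarrow> \<eta> > 0 \<Longrightarrow> CS.prob {\<omega>. \<eta> * real N \<le> \<bar>XS S \<omega> N\<bar>} \<le> C / \<eta>^2 * real N powr (-1/4)"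
    using prob_bound[OF S] by blast
  show ?thesis
    unfolding AE_all_countable
  proof
    fix m :: nat
    define \<eta> where "\<eta> = 1 / real (m+1)"
    have \<eta>: "\<eta> > 0" unfolding \<eta>_def by simp
    define A where "A t = {\<omega>\<in>space coin_space. \<eta> * real ((t+1)^8) \<le> \<bar>XS S \<omega> ((t+1)^8)\<bar>}" for t :: nat
    have Ameas: "A t \<in> sets coin_space" for t unfolding A_def by measurable
    have Afin: "emeasure coin_space (A t) < \<infinity>" for t by (simp add: CS.emeasure_eq_measure)
    have Abound: "measure coin_space (A t) \<le> C / \<eta>^2 * inverse (real (Suc t) ^ 2)" for t
    proof -
      have "A t = {\<omega>. \<eta> * real ((t+1)^8) \<le> \<bar>XS S \<omega> ((t+1)^8)\<bar>}" by (simp add: A_def)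
      then have "measure coin_space (A t) \<le> C / \<eta>^2 * real ((t+1)^8) powr (-1/4)"
        using C[of "(t+1)^8" \<eta>] \<eta> by simp
      also have "real ((t+1)^8) powr (-1/4) = inverse (real (Suc t) ^ 2)"
      proof -
        have p: "real (Suc t) > 0" by simp
        have "real ((t+1)^8) powr (-1/4) = (real (Suc t) powr 8) powr (-1/4)"
          using p by (simp add: powr_realpow)
        also have "\<dots> = real (Suc t) powr (8 * (-1/4))" by (rule powr_powr)
        also have "\<dots> = real (Suc t) powr (-2)"
          by (rule arg_cong[where f="\<lambda>x. real (Suc t) powr x"]) simp
        also have "\<dots> = inverse (real (Suc t) ^ 2)"
          using p by (simp add: powr_minus powr_realpow)
        finally show ?thesis .
      qed
      finally show ?thesis .
    qed
    have sum: "summable (\<lambda>t. measure coin_space (A t))"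
    proof (rule summable_comparison_test')
      show "summable (\<lambda>t. C / \<eta>^2 * inverse (real (Suc t) ^ 2))"
        by (rule summable_mult[OF summable_inv_sq])
      fix t :: nat show "norm (measure coin_space (A t)) \<le> C / \<eta>^2 * inverse (real (Suc t) ^ 2)"
        using Abound[of t] by simp
    qed
    have "AE \<omega> in coin_space. eventually (\<lambda>t. \<omega> \<in> space coin_space - A t) sequentially"
      by (rule borel_cantelli_AE1[OF Ameas Afin sum])
    then show "AE \<omega> in coin_space. eventually (\<lambda>t. \<bar>XS S \<omega> ((t+1)^8)\<bar> < (1 / real (m+1)) * real ((t+1)^8)) sequentially"
    proof (rule AE_mp[OF _ AE_I2], intro impI)
      fix \<omega> assume "eventually (\<lambda>t. \<omega> \<in> space coin_space - A t) sequentially"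
      then show "eventually (\<lambda>t. \<bar>XS S \<omega> ((t+1)^8)\<bar> < (1 / real (m+1)) * real ((t+1)^8)) sequentially"
        by (rule eventually_mono) (auto simp: A_def \<eta>_def)
    qed
  qed
qed



lemma fS_abs: "\<bar>fS S \<omega> i\<bar> \<le> 1"
proof -
  have "\<bar>fS S \<omega> i\<bar> = (\<Prod>j\<in>S. \<bar>lamR \<omega> (i + j)\<bar>)" unfolding fS_def by (rule abs_prod)
  also have "\<dots> \<le> (\<Prod>j\<in>S. 1)" by (rule prod_mono) (simp add: lamR_abs)
  finally show ?thesis by simp
qed

lemma diff_bound:
  fixes f :: "nat \<Rightarrow> real"
  assumes "\<And>i. \<bar>f i\<bar> \<le> 1"
  shows "\<bar>(\<Sum>i\<in>{1..M+d}. f i) - (\<Sum>i\<in>{1..M}. f i)\<bar> \<le> real d"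
proof (induction d)
  case 0
  then show ?case by simp
next
  case (Suc d)
  have "(\<Sum>i\<in>{1..M + Suc d}. f i) = (\<Sum>i\<in>{1..M+d}. f i) + f (Suc (M + d))"
    by (simp add: sum.cl_ivl_Suc)
  then have "\<bar>(\<Sum>i\<in>{1..M + Suc d}. f i) - (\<Sum>i\<in>{1..M}. f i)\<bar>
      \<le> \<bar>(\<Sum>i\<in>{1..M+d}. f i) - (\<Sum>i\<in>{1..M}. f i)\<bar> + \<bar>f (Suc (M + d))\<bar>" by simp
  also have "\<dots> \<le> real d + 1" using Suc.IH assms[of "Suc (M + d)"] by simp
  finally show ?case by simp
qed

lemma bracket:
  assumes "(T+1)^8 \<le> (N::nat)"
  shows "\<exists>t\<ge>T. (t+1)^8 \<le> N \<and> N < (t+2)^8"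
proof -
  define A where "A = {t. (t+1)^8 \<le> N}"
  have "t \<le> N" if "t \<in> A" for t
  proof -
    have "t + 1 \<le> (t+1)^8" by (rule self_le_power) simp_all
    then show ?thesis using that by (simp add: A_def)
  qed
  then have finA: "finite A" by (meson finite_atMost finite_subset subsetI atMost_iff)
  have TA: "T \<in> A" using assms by (simp add: A_def)
  define t where "t = Max A"
  have tA: "t \<in> A" unfolding t_def using finA TA by (intro Max_in) auto
  have Tt: "T \<le> t" unfolding t_def using finA TA by (rule Max_ge)
  have "N < (t+2)^8"
  proof (rule ccontr)
    assume "\<not> N < (t+2)^8"
    then have "Suc t \<in> A" by (simp add: A_def)
    then have "Suc t \<le> t" unfolding t_def by (rule Max_ge[OF finA])
    then show False by simp
  qed
  then show ?thesis using tA Tt by (auto simp: A_def)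
qed

lemma ratio_lim: "((\<lambda>t::nat. ((real t + 2)^8 - (real t + 1)^8) / (real t + 1)^8) \<longlongrightarrow> 0) at_top"
  by real_asymp

lemma interp:
  fixes f :: "nat \<Rightarrow> real"
  assumes bound: "\<And>i. \<bar>f i\<bar> \<le> 1"
    and ev: "\<forall>m::nat. eventually (\<lambda>t. \<bar>(\<Sum>i\<in>{1..(t+1)^8}. f i)\<bar> < (1 / real (m+1)) * real ((t+1)^8)) sequentially"
  shows "(\<lambda>N. (\<Sum>i\<in>{1..N}. f i) / real N) \<longlonglongrightarrow> 0"
proof (rule LIMSEQ_I)
  fix r :: real assume r: "r > 0"
  define X where "X N = (\<Sum>i\<in>{1..N}. f i)" for N
  obtain m0 :: nat where m0: "0 < m0" "inverse (real m0) < r / 2"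
    using ex_inverse_of_nat_less[of "r/2"] r by auto
  define m where "m = m0 - 1"
  have "real (m+1) = real m0" using m0 by (simp add: m_def)
  then have m': "1 / real (m+1) < r / 2" using m0 by (simp add: inverse_eq_divide)
  have e1: "eventually (\<lambda>t. \<bar>X ((t+1)^8)\<bar> < (1 / real (m+1)) * real ((t+1)^8)) sequentially"
    using ev unfolding X_def by blast
  have e2: "eventually (\<lambda>t. ((real t + 2)^8 - (real t + 1)^8) / (real t + 1)^8 < r/2) sequentially"
    using order_tendstoD(2)[OF ratio_lim, of "r/2"] r by simp
  obtain T where T: "\<And>t. t \<ge> T \<Longrightarrow> \<bar>X ((t+1)^8)\<bar> < (1 / real (m+1)) * real ((t+1)^8)
      \<and> ((real t + 2)^8 - (real t + 1)^8) / (real t + 1)^8 < r/2"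
    using eventually_conj[OF e1 e2] unfolding eventually_sequentially by blast
  show "\<exists>no. \<forall>n\<ge>no. norm ((\<Sum>i\<in>{1..n}. f i) / real n - 0) < r"
  proof (intro exI allI impI)
    fix N assume N: "N \<ge> (T+1)^8"
    obtain t where t: "t \<ge> T" "(t+1)^8 \<le> N" "N < (t+2)^8" using bracket[OF N] by blast
    define M where "M = (t+1)^8"
    have Mpos: "real M > 0" by (simp add: M_def)
    have "M \<le> N" using t(2) by (simp add: M_def)
    then have MN: "real M \<le> real N" by (simp only: of_nat_le_iff)
    have NM: "real N - real M \<le> (real t + 2)^8 - (real t + 1)^8"
    proof -
      have "real N < real ((t+2)^8)" using t(3) by (simp only: of_nat_less_iff)
      then show ?thesis by (simp add: M_def add.commute)
    qed
    have d: "\<bar>X N - X M\<bar> \<le> real N - real M"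
    proof -
      have "N = M + (N - M)" using t(2) by (simp add: M_def)
      then have "\<bar>X N - X M\<bar> = \<bar>X (M + (N - M)) - X M\<bar>" by simp
      also have "\<dots> \<le> real (N - M)" unfolding X_def by (rule diff_bound[OF bound])
      finally show ?thesis using t(2) by (simp add: M_def of_nat_diff)
    qed
    have TT: "\<bar>X M\<bar> < (1 / real (m+1)) * real M" using T[OF t(1)] by (simp add: M_def)
    have RR: "((real t + 2)^8 - (real t + 1)^8) < r/2 * real M"
    proof -
      have "((real t + 2)^8 - (real t + 1)^8) / (real t + 1)^8 < r/2" using T[OF t(1)] by blast
      moreover have "real M = (real t + 1)^8" by (simp add: M_def add.commute)
      ultimately show ?thesis using Mpos by (simp add: divide_less_eq)
    qed
    have "\<bar>X N\<bar> \<le> \<bar>X M\<bar> + \<bar>X N - X M\<bar>" by simp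
    also have "\<dots> < r/2 * real M + r/2 * real M"
    proof -
      have "(1 / real (m+1)) * real M \<le> r/2 * real M"
        using m' Mpos by (intro mult_right_mono) auto
      then show ?thesis using TT d NM RR by linarith
    qed
    also have "\<dots> \<le> r * real N" using MN r by simp
    finally have "\<bar>X N\<bar> < r * real N" .
    moreover have "real N > 0" using Mpos MN by simp
    ultimately show "norm ((\<Sum>i\<in>{1..N}. f i) / real N - 0) < r"
      by (simp add: X_def abs_divide divide_less_eq)
  qed
qed



lemma ind_factor:
  fixes x :: real
  assumes "x = 1 \<or> x = -1"
  shows "(1 + (if b then -1 else 1) * x) / 2 = (if (x = -1) = b then 1 else 0)"
  using assms by (cases b) auto

lemma prod_ind:
  assumes "finite A"
  shows "(\<Prod>j\<in>A. (if P j then 1 else 0 :: real)) = (if \<forall>j\<in>A. P j then 1 else 0)"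
proof (cases "\<forall>j\<in>A. P j")
  case True
  then show ?thesis by simp
next
  case False
  then obtain j where "j \<in> A" "\<not> P j" by blast
  then show ?thesis using assms False by (simp add: prod_zero_iff)
qed

lemma in_AQ: "i \<ge> 1 \<Longrightarrow> (i \<in> AQ (primes_of \<omega>)) = (lamR \<omega> i = -1)"
proof -
  assume "i \<ge> 1"
  have e: "(real_of_int x = -1) = (x = -1)" for x :: int
    by (metis of_int_eq_iff of_int_minus of_int_1)
  show ?thesis unfolding AQ_def lamR_def e using \<open>i \<ge> 1\<close> by simp
qed

lemma expand_i:
  fixes w :: "bool list"
  defines "k \<equiv> length w"
  defines "s \<equiv> \<lambda>j. if w ! j then -1 else (1::real)"
  assumes i: "i \<ge> 1"
  shows "(if \<forall>j<k. ((i + j) \<in> AQ (primes_of \<omega>)) = w ! j then 1 else 0)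
       = (1/2)^k * (\<Sum>T\<in>Pow {..<k}. (\<Prod>j\<in>T. s j) * fS T \<omega> i)"
proof -
  have "(if \<forall>j<k. ((i + j) \<in> AQ (primes_of \<omega>)) = w ! j then 1 else (0::real))
      = (\<Prod>j\<in>{..<k}. (if ((i + j) \<in> AQ (primes_of \<omega>)) = w ! j then 1 else 0))"
    by (subst prod_ind) auto
  also have "\<dots> = (\<Prod>j\<in>{..<k}. (1 + s j * lamR \<omega> (i + j)) / 2)"
  proof (rule prod.cong[OF refl])
    fix j assume "j \<in> {..<k}"
    have "((i + j) \<in> AQ (primes_of \<omega>)) = (lamR \<omega> (i + j) = -1)" using i by (intro in_AQ) simp
    then show "(if ((i + j) \<in> AQ (primes_of \<omega>)) = w ! j then 1 else 0) = (1 + s j * lamR \<omega> (i + j)) / 2"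
      unfolding s_def using ind_factor[OF lamR_pm[of \<omega> "i+j"], of "w ! j"] by simp
  qed
  also have "\<dots> = (1/2)^k * (\<Prod>j\<in>{..<k}. (s j * lamR \<omega> (i + j) + 1))"
  proof -
    have "(\<Prod>j\<in>{..<k}. (1 + s j * lamR \<omega> (i + j)) / 2) = (\<Prod>j\<in>{..<k}. (1/2) * (s j * lamR \<omega> (i + j) + 1))"
      by (rule prod.cong) simp_all
    also have "\<dots> = (\<Prod>j\<in>{..<k}. (1/2::real)) * (\<Prod>j\<in>{..<k}. (s j * lamR \<omega> (i + j) + 1))"
      by (rule prod.distrib)
    also have "(\<Prod>j\<in>{..<k}. (1/2::real)) = (1/2)^k" by simp
    finally show ?thesis .
  qed
  also have "(\<Prod>j\<in>{..<k}. (s j * lamR \<omega> (i + j) + 1))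
      = (\<Sum>T\<in>Pow {..<k}. (\<Prod>j\<in>T. s j * lamR \<omega> (i + j)) * (\<Prod>j\<in>{..<k} - T. 1))"
    by (rule prod_add) simp
  also have "\<dots> = (\<Sum>T\<in>Pow {..<k}. (\<Prod>j\<in>T. s j) * fS T \<omega> i)"
    by (intro sum.cong refl) (simp add: fS_def prod.distrib)
  finally show ?thesis .
qed

lemma expand:
  fixes w :: "bool list"
  defines "k \<equiv> length w"
  defines "s \<equiv> \<lambda>j. if w ! j then -1 else (1::real)"
  shows "real (card {i\<in>{1..N}. \<forall>j<k. ((i + j) \<in> AQ (primes_of \<omega>)) = w ! j}) / real N
       = (1/2)^k * (\<Sum>T\<in>Pow {..<k}. (\<Prod>j\<in>T. s j) * (XS T \<omega> N / real N))"
proof -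
  have "real (card {i\<in>{1..N}. \<forall>j<k. ((i + j) \<in> AQ (primes_of \<omega>)) = w ! j})
      = (\<Sum>i\<in>{1..N}. (if \<forall>j<k. ((i + j) \<in> AQ (primes_of \<omega>)) = w ! j then 1 else 0))"
    by (simp add: sum.If_cases Int_def)
  also have "\<dots> = (\<Sum>i\<in>{1..N}. (1/2)^k * (\<Sum>T\<in>Pow {..<k}. (\<Prod>j\<in>T. s j) * fS T \<omega> i))"
    by (intro sum.cong refl) (unfold k_def s_def, rule expand_i, simp)
  also have "\<dots> = (1/2)^k * (\<Sum>T\<in>Pow {..<k}. (\<Prod>j\<in>T. s j) * XS T \<omega> N)"
  proof -
    have "(\<Sum>i\<in>{1..N}. (1/2)^k * (\<Sum>T\<in>Pow {..<k}. (\<Prod>j\<in>T. s j) * fS T \<omega> i))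
        = (1/2)^k * (\<Sum>i\<in>{1..N}. \<Sum>T\<in>Pow {..<k}. (\<Prod>j\<in>T. s j) * fS T \<omega> i)"
      by (rule sum_distrib_left[symmetric])
    also have "(\<Sum>i\<in>{1..N}. \<Sum>T\<in>Pow {..<k}. (\<Prod>j\<in>T. s j) * fS T \<omega> i)
        = (\<Sum>T\<in>Pow {..<k}. \<Sum>i\<in>{1..N}. (\<Prod>j\<in>T. s j) * fS T \<omega> i)"
      by (rule sum.swap)
    also have "\<dots> = (\<Sum>T\<in>Pow {..<k}. (\<Prod>j\<in>T. s j) * XS T \<omega> N)"
      by (intro sum.cong refl) (simp add: XS_def sum_distrib_left)
    finally show ?thesis .
  qed
  finally have eq: "real (card {i\<in>{1..N}. \<forall>j<k. ((i + j) \<in> AQ (primes_of \<omega>)) = w ! j})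
      = (1/2)^k * (\<Sum>T\<in>Pow {..<k}. (\<Prod>j\<in>T. s j) * XS T \<omega> N)" .
  have "(\<Sum>T\<in>Pow {..<k}. (\<Prod>j\<in>T. s j) * (XS T \<omega> N / real N))
      = (\<Sum>T\<in>Pow {..<k}. (\<Prod>j\<in>T. s j) * XS T \<omega> N) / real N"
    by (simp add: sum_divide_distrib)
  then show ?thesis using eq by simp
qed

lemma normal_from:
  assumes H: "\<And>T. finite T \<Longrightarrow> (\<lambda>N. XS T \<omega> N / real N) \<longlonglongrightarrow> (if T = {} then 1 else 0)"
  shows "normal_set (AQ (primes_of \<omega>))"
  unfolding normal_set_def
proof
  fix w :: "bool list"
  define k where "k = length w"
  define s where "s = (\<lambda>j. if w ! j then -1 else (1::real))"
  have lim: "(\<lambda>N. (1/2)^k * (\<Sum>T\<in>Pow {..<k}. (\<Prod>j\<in>T. s j) * (XS T \<omega> N / real N)))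
      \<longlonglongrightarrow> (1/2)^k * (\<Sum>T\<in>Pow {..<k}. (\<Prod>j\<in>T. s j) * (if T = {} then 1 else 0))"
    by (intro tendsto_intros H) (auto intro: finite_subset)
  have "(\<Sum>T\<in>Pow {..<k}. (\<Prod>j\<in>T. s j) * (if T = {} then 1 else 0)) = (\<Sum>T\<in>Pow {..<k}. if T = {} then (\<Prod>j\<in>T. s j) else 0)"
    by (intro sum.cong refl) simp
  also have "\<dots> = 1" by (subst sum.delta) auto
  finally have "(1/2)^k * (\<Sum>T\<in>Pow {..<k}. (\<Prod>j\<in>T. s j) * (if T = {} then 1 else 0)) = (1/2)^k" by simp
  with lim have "(\<lambda>N. real (card {i\<in>{1..N}. \<forall>j<k. ((i + j) \<in> AQ (primes_of \<omega>)) = w ! j}) / real N) \<longlonglongrightarrow> (1/2)^k"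
    unfolding k_def s_def expand by simp
  then show "(\<lambda>N. real (card {i \<in> {1..N}. \<forall>j<length w. ((i + j) \<in> AQ (primes_of \<omega>)) = w ! j}) / real N)
           \<longlonglongrightarrow> (1/2) ^ length w" by (simp add: k_def)
qed

theorem mainTheorem12:
  shows "AE \<omega> in coin_space. normal_set (AQ (primes_of \<omega>))"
proof -
  have "AE \<omega> in coin_space. \<forall>xs::nat list. (\<lambda>N. XS (set xs) \<omega> N / real N) \<longlonglongrightarrow> (if set xs = {} then 1 else 0)"
    unfolding AE_all_countable
  proof
    fix xs :: "nat list"
    show "AE \<omega> in coin_space. (\<lambda>N. XS (set xs) \<omega> N / real N) \<longlonglongrightarrow> (if set xs = {} then 1 else 0)"
    proof (cases "set xs = {}")
      case True
      show ?thesis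
      proof (rule AE_I2)
        fix \<omega>
        have "eventually (\<lambda>N. XS (set xs) \<omega> N / real N = 1) sequentially"
          using eventually_ge_at_top[of "1::nat"]
          by (rule eventually_mono) (simp add: True XS_def fS_def)
        then have "(\<lambda>N. XS (set xs) \<omega> N / real N) \<longlonglongrightarrow> 1" by (rule tendsto_eventually)
        then show "(\<lambda>N. XS (set xs) \<omega> N / real N) \<longlonglongrightarrow> (if set xs = {} then 1 else 0)"
          using True by simp
      qed
    next
      case False
      define S where "S = set xs"
      have "\<exists>j0. j0 \<in> S" using False unfolding S_def by (simp add: ex_in_conv)
      then obtain j0 where j0: "j0 \<in> S" by blast
      have fin: "finite S" by (simp add: S_def)
      have sub: "S \<subseteq> {..<Suc (Max S)}"
        using fin by (auto simp: less_Suc_eq_le)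
      show ?thesis
      proof (rule AE_mp[OF AE_sub[OF fin sub j0] AE_I2], intro impI)
        fix \<omega>
        assume ev: "\<forall>m::nat. eventually (\<lambda>t. \<bar>XS S \<omega> ((t+1)^8)\<bar> < (1 / real (m+1)) * real ((t+1)^8)) sequentially"
        have "(\<lambda>N. (\<Sum>i\<in>{1..N}. fS S \<omega> i) / real N) \<longlonglongrightarrow> 0"
          by (rule interp[OF fS_abs]) (use ev in \<open>simp add: XS_def\<close>)
        then show "(\<lambda>N. XS (set xs) \<omega> N / real N) \<longlonglongrightarrow> (if set xs = {} then 1 else 0)"
          using False by (simp add: XS_def S_def)
      qed
    qed
  qed
  then show ?thesis
  proof (rule AE_mp[OF _ AE_I2], intro impI)
    fix \<omega>
    assume A: "\<forall>xs::nat list. (\<lambda>N. XS (set xs) \<omega> N / real N) \<longlonglongrightarrow> (if set xs = {} then 1 else 0)"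
    show "normal_set (AQ (primes_of \<omega>))"
    proof (rule normal_from)
      fix T :: "nat set" assume "finite T"
      then obtain xs where "set xs = T" using finite_list by blast
      then show "(\<lambda>N. XS T \<omega> N / real N) \<longlonglongrightarrow> (if T = {} then 1 else 0)" using A by blast
    qed
  qed
qed


end
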